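(* Let $R$ be a hyperring. The topological space $X=\operatorname{Spec}R$ (with the Zariski topology) is disconnected if and only if $R$ has an element $e$ with $e^2=e$ and $e\notin\{0,1\}$.
   Context: A hyperoperation $+:H\times H\to\mathcal{P}^*(H)$ is extended to subsets by $A+B=\bigcup_{a\in A,b\in B}(a+b)$. A (canonical) hypergroup is a nonempty set with a commutative associative hyperoperation, a unique $0$ with $0+x=\{x\}$, unique inverses $-x$ with $0\in x+(-x)$, and reversibility $x\in y+z\iff z\in x+(-y)$; $x-y:=x+(-y)$. A hyperring $(R,+,\cdot,0,1)$ is a hypergroup $(R,+,0)$ with a commutative monoid $(R,\cdot,1)$ such that $x(y+z)=xy+xz$, $0x=0$, $0\neq1$. A hyperideal is a nonempty $I\subseteq R$ with $a-rb\subseteq I$ for $a,b\in I$, $r\in R$; it is prime if $I\neq R$ and $xy\in I\Rightarrow x\in I$ or $y\in I$. $\operatorname{Spec}R$ is the set of prime hyperideals, with the Zariski topology whose closed sets are exactly the sets $V(I)=\{\mathfrak{p}\in\operatorname{Spec}R\mid I\subseteq\mathfrak{p}\}$ for hyperideals $I$. *)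

theory Defs
  imports "HOL-Analysis.Abstract_Topology"
begin

text \<open>A hyperring is modelled on a type 'a (the carrier is UNIV), with a
hyperaddition add :: 'a => 'a => 'a set, a multiplication mul, and constants zero, one.\<close>

definition set_hadd :: "('a \<Rightarrow> 'a \<Rightarrow> 'a set) \<Rightarrow> 'a set \<Rightarrow> 'a set \<Rightarrow> 'a set" where
  "set_hadd add A B = (\<Union>a\<in>A. \<Union>b\<in>B. add a b)"

definition hneg :: "('a \<Rightarrow> 'a \<Rightarrow> 'a set) \<Rightarrow> 'a \<Rightarrow> 'a \<Rightarrow> 'a" where
  "hneg add zero x = (THE y. zero \<in> add x y)"

definition hypergroup :: "('a \<Rightarrow> 'a \<Rightarrow> 'a set) \<Rightarrow> 'a \<Rightarrow> bool" where
  "hypergroup add zero \<longleftrightarrow>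
     (\<forall>x y. add x y \<noteq> {}) \<and>
     (\<forall>x y. add x y = add y x) \<and>
     (\<forall>x y z. set_hadd add (add x y) {z} = set_hadd add {x} (add y z)) \<and>
     (\<forall>x. add zero x = {x}) \<and>
     (\<forall>z. (\<forall>x. add z x = {x}) \<longrightarrow> z = zero) \<and>
     (\<forall>x. \<exists>!y. zero \<in> add x y) \<and>
     (\<forall>x y z. x \<in> add y z \<longleftrightarrow> z \<in> add x (hneg add zero y))"

definition hyperring ::
  "('a \<Rightarrow> 'a \<Rightarrow> 'a set) \<Rightarrow> ('a \<Rightarrow> 'a \<Rightarrow> 'a) \<Rightarrow> 'a \<Rightarrow> 'a \<Rightarrow> bool" where
  "hyperring add mul zero one \<longleftrightarrow>
     hypergroup add zero \<and>
     (\<forall>x y z. mul (mul x y) z = mul x (mul y z)) \<and>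
     (\<forall>x y. mul x y = mul y x) \<and>
     (\<forall>x. mul one x = x) \<and>
     (\<forall>x y z. mul x ` add y z = add (mul x y) (mul x z)) \<and>
     (\<forall>x. mul zero x = zero) \<and>
     zero \<noteq> one"

definition hyperideal ::
  "('a \<Rightarrow> 'a \<Rightarrow> 'a set) \<Rightarrow> ('a \<Rightarrow> 'a \<Rightarrow> 'a) \<Rightarrow> 'a \<Rightarrow> 'a set \<Rightarrow> bool" where
  "hyperideal add mul zero I \<longleftrightarrow>
     I \<noteq> {} \<and> (\<forall>a\<in>I. \<forall>b\<in>I. \<forall>r. add a (hneg add zero (mul r b)) \<subseteq> I)"

definition prime_hyperideal ::
  "('a \<Rightarrow> 'a \<Rightarrow> 'a set) \<Rightarrow> ('a \<Rightarrow> 'a \<Rightarrow> 'a) \<Rightarrow> 'a \<Rightarrow> 'a set \<Rightarrow> bool" where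
  "prime_hyperideal add mul zero P \<longleftrightarrow>
     hyperideal add mul zero P \<and> P \<noteq> UNIV \<and>
     (\<forall>x y. mul x y \<in> P \<longrightarrow> x \<in> P \<or> y \<in> P)"

definition hSpec ::
  "('a \<Rightarrow> 'a \<Rightarrow> 'a set) \<Rightarrow> ('a \<Rightarrow> 'a \<Rightarrow> 'a) \<Rightarrow> 'a \<Rightarrow> 'a set set" where
  "hSpec add mul zero = {P. prime_hyperideal add mul zero P}"

definition hV ::
  "('a \<Rightarrow> 'a \<Rightarrow> 'a set) \<Rightarrow> ('a \<Rightarrow> 'a \<Rightarrow> 'a) \<Rightarrow> 'a \<Rightarrow> 'a set \<Rightarrow> 'a set set" where
  "hV add mul zero I = {P \<in> hSpec add mul zero. I \<subseteq> P}"

definition zariski ::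
  "('a \<Rightarrow> 'a \<Rightarrow> 'a set) \<Rightarrow> ('a \<Rightarrow> 'a \<Rightarrow> 'a) \<Rightarrow> 'a \<Rightarrow> 'a set topology" where
  "zariski add mul zero = topology (\<lambda>U. \<exists>I. hyperideal add mul zero I \<and>
       U = hSpec add mul zero - hV add mul zero I)"

end

theory Submission
  imports Defs
begin

locale hr =
  fixes add :: "'a \<Rightarrow> 'a \<Rightarrow> 'a set" and mul :: "'a \<Rightarrow> 'a \<Rightarrow> 'a"
    and zero one :: 'a
  assumes HR: "hyperring add mul zero one"
begin

abbreviation neg where "neg x \<equiv> hneg add zero x"

lemma HG: "hypergroup add zero" using HR unfolding hyperring_def by (rule conjunct1)

lemmas HGs = HG[unfolded hypergroup_def]
lemma add_comm: "add x y = add y x" using HGs[THEN conjunct2, THEN conjunct1] by blast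
lemma add_zero: "add zero x = {x}" using HGs[THEN conjunct2, THEN conjunct2, THEN conjunct2, THEN conjunct1] by blast
lemma add_zero_r: "add x zero = {x}" using add_zero add_comm by metis
lemma neg_ex1: "\<exists>!y. zero \<in> add x y" using HGs[THEN conjunct2, THEN conjunct2, THEN conjunct2, THEN conjunct2, THEN conjunct2, THEN conjunct1] by blast
lemma rev: "x \<in> add y z \<longleftrightarrow> z \<in> add x (neg y)" using HGs[THEN conjunct2, THEN conjunct2, THEN conjunct2, THEN conjunct2, THEN conjunct2, THEN conjunct2] by blast
lemma assoc_set: "set_hadd add (add x y) {z} = set_hadd add {x} (add y z)"
  using HGs[THEN conjunct2, THEN conjunct2, THEN conjunct1] by blast

lemma assoc_el: "(\<exists>u\<in>add a b. w \<in> add u c) \<longleftrightarrow> (\<exists>v\<in>add b c. w \<in> add a v)"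
proof -
  have "w \<in> set_hadd add (add a b) {c} \<longleftrightarrow> w \<in> set_hadd add {a} (add b c)"
    using assoc_set by simp
  moreover have "w \<in> set_hadd add (add a b) {c} \<longleftrightarrow> (\<exists>u\<in>add a b. w \<in> add u c)"
    by (simp add: set_hadd_def)
  moreover have "w \<in> set_hadd add {a} (add b c) \<longleftrightarrow> (\<exists>v\<in>add b c. w \<in> add a v)"
    by (simp add: set_hadd_def)
  ultimately show ?thesis by simp
qed

lemma neg_in: "zero \<in> add x (neg x)"
  unfolding hneg_def using theI'[OF neg_ex1] .

lemma neg_unique: "zero \<in> add x y \<Longrightarrow> y = neg x"
  unfolding hneg_def using the1_equality[OF neg_ex1] by metis

lemma neg_neg: "neg (neg x) = x"
  using neg_unique[of "neg x" x] neg_in[of x] add_comm by metis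

lemma neg_zero: "neg zero = zero"
  using neg_unique[of zero zero] add_zero by simp

lemmas HRs = HR[unfolded hyperring_def]
lemma mul_assoc: "mul (mul x y) z = mul x (mul y z)" using HRs[THEN conjunct2, THEN conjunct1] by blast
lemma mul_comm: "mul x y = mul y x" using HRs[THEN conjunct2, THEN conjunct2, THEN conjunct1] by blast
lemma mul_one: "mul one x = x" using HRs[THEN conjunct2, THEN conjunct2, THEN conjunct2, THEN conjunct1] by blast
lemma mul_one_r: "mul x one = x" using mul_one mul_comm by metis
lemma distrib: "mul x ` add y z = add (mul x y) (mul x z)" using HRs[THEN conjunct2, THEN conjunct2, THEN conjunct2, THEN conjunct2, THEN conjunct1] by blast
lemma mul_zero: "mul zero x = zero" using HRs[THEN conjunct2, THEN conjunct2, THEN conjunct2, THEN conjunct2, THEN conjunct2, THEN conjunct1] by blast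
lemma mul_zero_r: "mul x zero = zero" using mul_zero mul_comm by metis
lemma zero_one: "zero \<noteq> one" using HRs by blast

lemma mul_in: "z \<in> add y w \<Longrightarrow> mul x z \<in> add (mul x y) (mul x w)"
  using distrib by blast

lemma mul_neg: "mul x (neg y) = neg (mul x y)"
proof -
  have "mul x zero \<in> add (mul x y) (mul x (neg y))" using mul_in[OF neg_in] .
  thus ?thesis using neg_unique mul_zero_r by metis
qed

definition hid :: "'a set \<Rightarrow> bool" where
  "hid I \<longleftrightarrow> zero \<in> I \<and> (\<forall>a\<in>I. \<forall>r. mul r a \<in> I) \<and> (\<forall>a\<in>I. \<forall>b\<in>I. add a b \<subseteq> I)"

lemma hyperideal_iff: "hyperideal add mul zero I \<longleftrightarrow> hid I"
proof
  assume H: "hyperideal add mul zero I"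
  then obtain a where a: "a \<in> I" unfolding hyperideal_def by blast
  have C: "\<And>a b r. a \<in> I \<Longrightarrow> b \<in> I \<Longrightarrow> add a (neg (mul r b)) \<subseteq> I"
    using H unfolding hyperideal_def by blast
  have z: "zero \<in> I" using C[OF a a, of one] neg_in[of a] mul_one[of a] by auto
  have n: "neg (mul r b) \<in> I" if "b \<in> I" for r b
    using C[OF z that, of r] add_zero by blast
  have m: "mul r b \<in> I" if "b \<in> I" for r b
    using n[OF n[OF that, of r], of one] mul_one neg_neg by metis
  have s: "add a b \<subseteq> I" if "a \<in> I" "b \<in> I" for a b
    using C[OF that(1) n[OF that(2), of one], of one] mul_one neg_neg by metis
  show "hid I" unfolding hid_def using z m s by blast
next
  assume H: "hid I"
  have "neg (mul r b) \<in> I" if "b \<in> I" for r b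
  proof -
    have "mul (mul r b) (neg one) = neg (mul r b)" using mul_neg mul_one_r by metis
    moreover have "mul (neg one) (mul r b) \<in> I" using H that unfolding hid_def by blast
    ultimately show ?thesis using mul_comm by metis
  qed
  thus "hyperideal add mul zero I" using H unfolding hid_def hyperideal_def by blast
qed


lemma hid_mul: "hid I \<Longrightarrow> a \<in> I \<Longrightarrow> mul r a \<in> I" unfolding hid_def by blast
lemma hid_mul2: "hid I \<Longrightarrow> a \<in> I \<Longrightarrow> mul a r \<in> I" using hid_mul mul_comm by metis
lemma hid_add: "hid I \<Longrightarrow> a \<in> I \<Longrightarrow> b \<in> I \<Longrightarrow> z \<in> add a b \<Longrightarrow> z \<in> I"
  unfolding hid_def by blast
lemma hid_zero: "hid I \<Longrightarrow> zero \<in> I" unfolding hid_def by blast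
lemma hid_one: "hid I \<Longrightarrow> one \<in> I \<Longrightarrow> I = UNIV"
  using hid_mul[of I one] mul_one_r by auto

lemma prime_iff: "prime_hyperideal add mul zero P \<longleftrightarrow>
   hid P \<and> one \<notin> P \<and> (\<forall>x y. mul x y \<in> P \<longrightarrow> x \<in> P \<or> y \<in> P)"
  unfolding prime_hyperideal_def hyperideal_iff using hid_one by auto

lemma hid_UNIV: "hid UNIV" unfolding hid_def by blast
lemma hid_Inter: "\<forall>I\<in>F. hid I \<Longrightarrow> hid (\<Inter>F)" unfolding hid_def by blast

lemma hid_colon: assumes "hid P" shows "hid {z. mul z y \<in> P}"
proof -
  have "zero \<in> {z. mul z y \<in> P}" using mul_zero hid_zero[OF assms] by simp
  moreover have "mul r a \<in> {z. mul z y \<in> P}" if "a \<in> {z. mul z y \<in> P}" for a r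
    using that hid_mul[OF assms, of "mul a y" r] mul_assoc by simp
  moreover have "add a b \<subseteq> {z. mul z y \<in> P}" if "a \<in> {z. mul z y \<in> P}" "b \<in> {z. mul z y \<in> P}" for a b
  proof
    fix z assume "z \<in> add a b"
    hence "mul y z \<in> add (mul y a) (mul y b)" by (rule mul_in)
    thus "z \<in> {z. mul z y \<in> P}" using that hid_add[OF assms] mul_comm by (metis mem_Collect_eq)
  qed
  ultimately show ?thesis unfolding hid_def by blast
qed

lemma exists_prime:
  assumes I: "hid I" and S: "\<forall>s\<in>S. \<forall>t\<in>S. mul s t \<in> S" and one: "one \<in> S" and dis: "I \<inter> S = {}"
  shows "\<exists>P. prime_hyperideal add mul zero P \<and> I \<subseteq> P \<and> P \<inter> S = {}"
proof -
  define A where "A = {J. hid J \<and> I \<subseteq> J \<and> J \<inter> S = {}}"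
  have "A \<noteq> {}" using I dis unfolding A_def by blast
  moreover have "\<Union>C \<in> A" if C: "C \<noteq> {}" "subset.chain A C" for C
  proof -
    have CA: "C \<subseteq> A" and ch: "\<forall>X\<in>C. \<forall>Y\<in>C. X \<subseteq> Y \<or> Y \<subseteq> X"
      using C(2) unfolding subset_chain_def by auto
    obtain J0 where J0: "J0 \<in> C" using C(1) by blast
    have "hid (\<Union>C)" unfolding hid_def
    proof (intro conjI ballI allI)
      show "zero \<in> \<Union>C" using J0 CA hid_zero unfolding A_def by blast
    next
      fix a r assume "a \<in> \<Union>C"
      then obtain X where "X \<in> C" "a \<in> X" by blast
      thus "mul r a \<in> \<Union>C" using CA hid_mul unfolding A_def by blast
    next
      fix a b assume "a \<in> \<Union>C" "b \<in> \<Union>C"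
      then obtain X Y where XY: "X \<in> C" "a \<in> X" "Y \<in> C" "b \<in> Y" by blast
      show "add a b \<subseteq> \<Union>C"
      proof (cases "X \<subseteq> Y")
        case True thus ?thesis using XY CA hid_add unfolding A_def by blast
      next
        case False hence "Y \<subseteq> X" using ch XY by blast
        thus ?thesis using XY CA hid_add unfolding A_def by blast
      qed
    qed
    moreover have "I \<subseteq> \<Union>C" using J0 CA unfolding A_def by blast
    moreover have "\<Union>C \<inter> S = {}" using CA unfolding A_def by blast
    ultimately show ?thesis unfolding A_def by blast
  qed
  ultimately obtain P where PA: "P \<in> A" and max: "\<forall>X\<in>A. P \<subseteq> X \<longrightarrow> X = P"
    using subset_Zorn_nonempty[of A] by blast
  have hP: "hid P" and IP: "I \<subseteq> P" and PS: "P \<inter> S = {}" using PA unfolding A_def by auto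
  have grow: "\<exists>s\<in>S. mul s y \<in> P" if "x \<notin> P" "mul x y \<in> P" for x y
  proof (rule ccontr)
    assume nx: "\<not> (\<exists>s\<in>S. mul s y \<in> P)"
    let ?Q = "{z. mul z y \<in> P}"
    have "P \<subseteq> ?Q" using hid_mul2[OF hP] by blast
    moreover have "?Q \<in> A" unfolding A_def using hid_colon[OF hP] IP nx \<open>P \<subseteq> ?Q\<close> by blast
    ultimately have "?Q = P" using max by blast
    thus False using that by blast
  qed
  have "prime_hyperideal add mul zero P" unfolding prime_iff
  proof (intro conjI allI impI)
    show "hid P" by fact
    show "one \<notin> P" using PS one by blast
  next
    fix x y assume xy: "mul x y \<in> P"
    show "x \<in> P \<or> y \<in> P"
    proof (rule ccontr)
      assume "\<not> (x \<in> P \<or> y \<in> P)"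
      hence nx: "x \<notin> P" and ny: "y \<notin> P" by auto
      obtain s where s: "s \<in> S" "mul s y \<in> P" using grow[OF nx xy] by blast
      have "mul y s \<in> P" using s mul_comm by metis
      then obtain t where t: "t \<in> S" "mul t s \<in> P" using grow[OF ny] by blast
      have "mul t s \<in> S" using S s t by blast
      thus False using t PS by blast
    qed
  qed
  thus ?thesis using IP PS by blast
qed

definition pw :: "'a \<Rightarrow> nat \<Rightarrow> 'a" where "pw x n = (mul x ^^ n) one"

lemma pw_0: "pw x 0 = one" by (simp add: pw_def)
lemma pw_Suc: "pw x (Suc n) = mul x (pw x n)" by (simp add: pw_def)

lemma pw_add: "mul (pw x m) (pw x n) = pw x (m + n)"
  by (induction m) (simp_all add: pw_0 pw_Suc mul_one mul_assoc)

lemma pw_mul: "pw (mul a b) n = mul (pw a n) (pw b n)"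
proof (induction n)
  case 0 thus ?case by (simp add: pw_0 mul_one)
next
  case (Suc n)
  have "pw (mul a b) (Suc n) = mul (mul a b) (mul (pw a n) (pw b n))" using Suc by (simp add: pw_Suc)
  also have "\<dots> = mul (mul a (pw a n)) (mul b (pw b n))"
    by (metis mul_assoc mul_comm)
  finally show ?case by (simp add: pw_Suc)
qed

lemma prime_pw: assumes P: "prime_hyperideal add mul zero P" and "pw x n \<in> P" shows "x \<in> P"
  using assms(2)
proof (induction n)
  case 0 thus ?case using P unfolding prime_iff by (simp add: pw_0)
next
  case (Suc n) thus ?case using P unfolding prime_iff by (auto simp: pw_Suc)
qed

lemma nilpotent:
  assumes "\<forall>P. prime_hyperideal add mul zero P \<longrightarrow> x \<in> P"
  shows "\<exists>n. pw x n = zero"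
proof (rule ccontr)
  assume nz: "\<not> (\<exists>n. pw x n = zero)"
  have h0: "hid {zero}" unfolding hid_def using mul_zero_r add_zero by auto
  have "\<forall>s\<in>range (pw x). \<forall>t\<in>range (pw x). mul s t \<in> range (pw x)" using pw_add by auto
  moreover have "one \<in> range (pw x)" using pw_0 by (metis rangeI)
  moreover have "{zero} \<inter> range (pw x) = {}" using nz by auto
  ultimately obtain P where P: "prime_hyperideal add mul zero P" "P \<inter> range (pw x) = {}"
    using exists_prime[OF h0] by blast
  have "pw x 1 = x" by (simp add: pw_def mul_one_r)
  thus False using P assms by (metis IntI empty_iff rangeI)
qed

definition princ :: "'a \<Rightarrow> 'a set" where "princ x = range (\<lambda>r. mul r x)"

lemma hid_princ: "hid (princ x)"
  unfolding hid_def princ_def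
proof (intro conjI ballI allI)
  show "zero \<in> range (\<lambda>r. mul r x)" using mul_zero by (metis rangeI)
next
  fix a r assume "a \<in> range (\<lambda>r. mul r x)"
  then obtain q where "a = mul q x" by blast
  thus "mul r a \<in> range (\<lambda>r. mul r x)" by (metis mul_assoc rangeI)
next
  fix a b assume "a \<in> range (\<lambda>r. mul r x)" "b \<in> range (\<lambda>r. mul r x)"
  then obtain s t where st: "a = mul s x" "b = mul t x" by blast
  have "add a b = mul x ` add s t" using st distrib mul_comm by metis
  thus "add a b \<subseteq> range (\<lambda>r. mul r x)" using mul_comm by auto
qed

lemma x_princ: "x \<in> princ x" unfolding princ_def using mul_one by (metis rangeI)

definition hsum :: "'a set \<Rightarrow> 'a set \<Rightarrow> 'a set" where
  "hsum I J = {z. \<exists>a\<in>I. \<exists>b\<in>J. z \<in> add a b}"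

lemma rearr:
  assumes "w \<in> add z1 z2" "z1 \<in> add a1 b1" "z2 \<in> add a2 b2"
  shows "\<exists>u\<in>add a1 a2. \<exists>t\<in>add b1 b2. w \<in> add u t"
proof -
  obtain v where v: "v \<in> add b1 z2" "w \<in> add a1 v" using assoc_el[of a1 b1 w z2] assms by blast
  have "v \<in> add z2 b1" using v add_comm by metis
  then obtain t where t: "t \<in> add b2 b1" "v \<in> add a2 t" using assoc_el[of a2 b2 v b1] assms by blast
  obtain u where u: "u \<in> add a1 a2" "w \<in> add u t" using assoc_el[of a1 a2 w t] v t by blast
  show ?thesis using u t add_comm by metis
qed

lemma hid_hsum: assumes I: "hid I" and J: "hid J" shows "hid (hsum I J)"
  unfolding hid_def hsum_def
proof (intro conjI ballI allI)
  show "zero \<in> {z. \<exists>a\<in>I. \<exists>b\<in>J. z \<in> add a b}"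
    using hid_zero[OF I] hid_zero[OF J] add_zero by auto
next
  fix z r assume "z \<in> {z. \<exists>a\<in>I. \<exists>b\<in>J. z \<in> add a b}"
  then obtain a b where "a \<in> I" "b \<in> J" "z \<in> add a b" by blast
  thus "mul r z \<in> {z. \<exists>a\<in>I. \<exists>b\<in>J. z \<in> add a b}"
    using mul_in hid_mul[OF I] hid_mul[OF J] by blast
next
  fix z1 z2 assume "z1 \<in> {z. \<exists>a\<in>I. \<exists>b\<in>J. z \<in> add a b}" "z2 \<in> {z. \<exists>a\<in>I. \<exists>b\<in>J. z \<in> add a b}"
  then obtain a1 b1 a2 b2 where ab: "a1 \<in> I" "b1 \<in> J" "z1 \<in> add a1 b1" "a2 \<in> I" "b2 \<in> J" "z2 \<in> add a2 b2"
    by blast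
  show "add z1 z2 \<subseteq> {z. \<exists>a\<in>I. \<exists>b\<in>J. z \<in> add a b}"
  proof
    fix w assume "w \<in> add z1 z2"
    then obtain u t where "u \<in> add a1 a2" "t \<in> add b1 b2" "w \<in> add u t" using rearr ab by blast
    thus "w \<in> {z. \<exists>a\<in>I. \<exists>b\<in>J. z \<in> add a b}" using hid_add[OF I] hid_add[OF J] ab by blast
  qed
qed

lemma cover:
  assumes I: "hid I" and J: "hid J"
    and np: "\<forall>P. prime_hyperideal add mul zero P \<longrightarrow> \<not> (I \<subseteq> P \<and> J \<subseteq> P)"
  shows "\<exists>a\<in>I. \<exists>b\<in>J. one \<in> add a b"
proof (rule ccontr)
  assume "\<not> ?thesis"
  hence "hsum I J \<inter> {one} = {}" unfolding hsum_def by blast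
  then obtain P where P: "prime_hyperideal add mul zero P" "hsum I J \<subseteq> P"
    using exists_prime[OF hid_hsum[OF I J], of "{one}"] mul_one by auto
  have "I \<subseteq> hsum I J" unfolding hsum_def using hid_zero[OF J] add_zero_r by blast
  moreover have "J \<subseteq> hsum I J" unfolding hsum_def using hid_zero[OF I] add_zero by blast
  ultimately show False using np P by blast
qed


lemma mem_Spec: "P \<in> hSpec add mul zero \<longleftrightarrow> prime_hyperideal add mul zero P"
  unfolding hSpec_def by simp

lemma mem_V: "P \<in> hV add mul zero I \<longleftrightarrow> prime_hyperideal add mul zero P \<and> I \<subseteq> P"
  unfolding hV_def hSpec_def by simp

lemma istop: "istopology (\<lambda>U. \<exists>I. hyperideal add mul zero I \<and> U = hSpec add mul zero - hV add mul zero I)"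
  unfolding istopology_def hyperideal_iff
proof (intro conjI allI impI)
  fix U W assume "\<exists>I. hid I \<and> U = hSpec add mul zero - hV add mul zero I"
    "\<exists>I. hid I \<and> W = hSpec add mul zero - hV add mul zero I"
  then obtain I J where IJ: "hid I" "U = hSpec add mul zero - hV add mul zero I"
    "hid J" "W = hSpec add mul zero - hV add mul zero J" by blast
  have "\<forall>K\<in>{I,J}. hid K" using IJ(1,3) by blast
  hence "hid (\<Inter>{I,J})" by (rule hid_Inter)
  hence "hid (I \<inter> J)" by simp
  moreover have "U \<inter> W = hSpec add mul zero - hV add mul zero (I \<inter> J)"
  proof (rule set_eqI)
    fix P
    show "P \<in> U \<inter> W \<longleftrightarrow> P \<in> hSpec add mul zero - hV add mul zero (I \<inter> J)"
    proof
      assume "P \<in> U \<inter> W"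
      hence PS: "P \<in> hSpec add mul zero" and nI: "P \<notin> hV add mul zero I" and nJ: "P \<notin> hV add mul zero J"
        using IJ(2,4) by auto
      have pr: "prime_hyperideal add mul zero P" using PS mem_Spec by auto
      have "\<not> I \<subseteq> P" using nI pr mem_V by auto
      then obtain a where a: "a \<in> I" "a \<notin> P" by blast
      have "\<not> J \<subseteq> P" using nJ pr mem_V by auto
      then obtain b where b: "b \<in> J" "b \<notin> P" by blast
      have "mul a b \<in> I \<inter> J" using hid_mul2[OF IJ(1) a(1)] hid_mul[OF IJ(3) b(1)] by blast
      hence "\<not> (I \<inter> J \<subseteq> P)"
        using pr a b unfolding prime_iff by blast
      hence "P \<notin> hV add mul zero (I \<inter> J)" using mem_V by auto
      thus "P \<in> hSpec add mul zero - hV add mul zero (I \<inter> J)" using PS by auto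
    next
      assume P: "P \<in> hSpec add mul zero - hV add mul zero (I \<inter> J)"
      hence PS: "P \<in> hSpec add mul zero" by auto
      have "P \<notin> hV add mul zero I" using P mem_V by auto
      moreover have "P \<notin> hV add mul zero J" using P mem_V by auto
      ultimately show "P \<in> U \<inter> W" using PS IJ(2,4) by auto
    qed
  qed
  ultimately show "\<exists>K. hid K \<and> U \<inter> W = hSpec add mul zero - hV add mul zero K" by blast
next
  fix F assume F: "\<forall>K\<in>F. \<exists>I. hid I \<and> K = hSpec add mul zero - hV add mul zero I"
  define Z where "Z = hSpec add mul zero - \<Union>F"
  have "\<forall>P\<in>Z. hid P"
  proof
    fix P assume "P \<in> Z"
    hence "prime_hyperideal add mul zero P" unfolding Z_def using mem_Spec[of P] by blast
    thus "hid P" using prime_iff[of P] by blast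
  qed
  hence "hid (\<Inter>Z)" by (rule hid_Inter)
  moreover have "\<Union>F = hSpec add mul zero - hV add mul zero (\<Inter>Z)"
  proof (rule set_eqI)
    fix P
    show "P \<in> \<Union>F \<longleftrightarrow> P \<in> hSpec add mul zero - hV add mul zero (\<Inter>Z)"
    proof
      assume "P \<in> \<Union>F"
      then obtain K where K: "K \<in> F" "P \<in> K" by blast
      then obtain I where I: "K = hSpec add mul zero - hV add mul zero I" using F by blast
      have PS: "P \<in> hSpec add mul zero" using K I by blast
      have "I \<subseteq> Q" if "Q \<in> Z" for Q
      proof -
        have "Q \<in> hSpec add mul zero" "Q \<notin> K" using that unfolding Z_def using K(1) by blast+
        thus ?thesis unfolding I using mem_V[of Q I] mem_Spec[of Q] by blast
      qed
      hence IZ: "I \<subseteq> \<Inter>Z" by blast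
      have "P \<notin> hV add mul zero (\<Inter>Z)"
      proof
        assume "P \<in> hV add mul zero (\<Inter>Z)"
        hence "\<Inter>Z \<subseteq> P" using mem_V[of P "\<Inter>Z"] by blast
        hence "P \<in> hV add mul zero I" using IZ PS mem_V[of P I] mem_Spec[of P] by blast
        thus False using K I by blast
      qed
      thus "P \<in> hSpec add mul zero - hV add mul zero (\<Inter>Z)" using PS by blast
    next
      assume P: "P \<in> hSpec add mul zero - hV add mul zero (\<Inter>Z)"
      show "P \<in> \<Union>F"
      proof (rule ccontr)
        assume "P \<notin> \<Union>F"
        hence "P \<in> Z" using P unfolding Z_def by blast
        hence "\<Inter>Z \<subseteq> P" by blast
        thus False using P mem_V[of P "\<Inter>Z"] mem_Spec[of P] by blast
      qed
    qed
  qed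
  ultimately show "\<exists>K. hid K \<and> \<Union>F = hSpec add mul zero - hV add mul zero K" by blast
qed

lemma open_zar: "openin (zariski add mul zero) U \<longleftrightarrow>
   (\<exists>I. hid I \<and> U = hSpec add mul zero - hV add mul zero I)"
  unfolding zariski_def topology_inverse'[OF istop] by (simp add: hyperideal_iff)

lemma top_zar: "topspace (zariski add mul zero) = hSpec add mul zero"
proof -
  have "openin (zariski add mul zero) (hSpec add mul zero)"
    unfolding open_zar
  proof (intro exI[of _ UNIV] conjI hid_UNIV)
    show "hSpec add mul zero = hSpec add mul zero - hV add mul zero UNIV"
    proof (rule set_eqI)
      fix P show "P \<in> hSpec add mul zero \<longleftrightarrow> P \<in> hSpec add mul zero - hV add mul zero UNIV"
        using mem_V[of P UNIV] prime_iff[of P] by blast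
    qed
  qed
  moreover have "openin (zariski add mul zero) U \<Longrightarrow> U \<subseteq> hSpec add mul zero" for U
    unfolding open_zar by blast
  ultimately show ?thesis unfolding topspace_def by blast
qed

lemma prime_add: "prime_hyperideal add mul zero P \<Longrightarrow> a \<in> P \<Longrightarrow> b \<in> P \<Longrightarrow> add a b \<subseteq> P"
  unfolding prime_iff using hid_add by blast

lemma hid_zs: "hid {zero}" unfolding hid_def using mul_zero_r add_zero by auto

lemma pw_in: assumes "hid P" "x \<in> P" "n \<noteq> 0" shows "pw x n \<in> P"
proof -
  obtain m where "n = Suc m" using assms(3) by (cases n) auto
  thus ?thesis using hid_mul2[OF assms(1,2)] by (simp add: pw_Suc)
qed

lemma prime_hid: "prime_hyperideal add mul zero P \<Longrightarrow> hid P" unfolding prime_iff by blast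
lemma prime_one: "prime_hyperideal add mul zero P \<Longrightarrow> one \<notin> P" unfolding prime_iff by blast
lemma prime_mul: "prime_hyperideal add mul zero P \<Longrightarrow> mul x y \<in> P \<Longrightarrow> x \<in> P \<or> y \<in> P"
  unfolding prime_iff by blast

lemma main: "\<not> connected_space (zariski add mul zero) \<longleftrightarrow> (\<exists>e. mul e e = e \<and> e \<noteq> zero \<and> e \<noteq> one)"
proof
  assume "\<not> connected_space (zariski add mul zero)"
  then obtain E1 E2 where E: "openin (zariski add mul zero) E1" "openin (zariski add mul zero) E2"
    "hSpec add mul zero \<subseteq> E1 \<union> E2" "E1 \<inter> E2 = {}" "E1 \<noteq> {}" "E2 \<noteq> {}"
    unfolding connected_space_def top_zar by blast
  then obtain I J where IJ: "hid I" "hid J" and E1: "E1 = hSpec add mul zero - hV add mul zero I"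
    and E2: "E2 = hSpec add mul zero - hV add mul zero J" unfolding open_zar by blast
  have cov: "\<not> (I \<subseteq> P \<and> J \<subseteq> P)" if "prime_hyperideal add mul zero P" for P
  proof -
    have "P \<in> E1 \<union> E2" using E(3) that mem_Spec[of P] by blast
    thus ?thesis unfolding E1 E2 using that mem_V[of P I] mem_V[of P J] by blast
  qed
  have dis: "I \<subseteq> P \<or> J \<subseteq> P" if "prime_hyperideal add mul zero P" for P
  proof -
    have "P \<notin> E1 \<inter> E2" using E(4) by blast
    thus ?thesis unfolding E1 E2 using that mem_Spec[of P] mem_V[of P I] mem_V[of P J] by blast
  qed
  obtain P1 where P1: "prime_hyperideal add mul zero P1" "\<not> I \<subseteq> P1"
  proof -
    obtain P where "P \<in> E1" using E(5) by blast
    thus ?thesis using that unfolding E1 using mem_Spec[of P] mem_V[of P I] by blast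
  qed
  obtain P2 where P2: "prime_hyperideal add mul zero P2" "\<not> J \<subseteq> P2"
  proof -
    obtain P where "P \<in> E2" using E(6) by blast
    thus ?thesis using that unfolding E2 using mem_Spec[of P] mem_V[of P J] by blast
  qed
  obtain a b where ab: "a \<in> I" "b \<in> J" "one \<in> add a b" using cover[OF IJ] cov by blast
  have abP: "mul a b \<in> P" if "prime_hyperideal add mul zero P" for P
  proof (cases "I \<subseteq> P")
    case True thus ?thesis using ab hid_mul2[OF prime_hid[OF that]] by blast
  next
    case False hence "J \<subseteq> P" using dis that by blast
    thus ?thesis using ab hid_mul[OF prime_hid[OF that]] by blast
  qed
  obtain n where n: "pw (mul a b) n = zero" using nilpotent abP by blast
  have n0: "n \<noteq> 0"
  proof
    assume "n = 0" hence "pw (mul a b) n = one" by (simp add: pw_0)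
    thus False using n zero_one by simp
  qed
  define A where "A = pw a n"
  define B where "B = pw b n"
  have AB: "mul A B = zero" using n pw_mul unfolding A_def B_def by metis
  have np: "\<not> (princ A \<subseteq> P \<and> princ B \<subseteq> P)" if P: "prime_hyperideal add mul zero P" for P
  proof
    assume "princ A \<subseteq> P \<and> princ B \<subseteq> P"
    hence "A \<in> P" "B \<in> P" using x_princ by blast+
    hence "a \<in> P" "b \<in> P" using prime_pw[OF P] unfolding A_def B_def by blast+
    hence "one \<in> P" using prime_add[OF P] ab(3) by blast
    thus False using prime_one[OF P] by blast
  qed
  obtain e f where ef: "e \<in> princ A" "f \<in> princ B" "one \<in> add e f"
    using cover[OF hid_princ hid_princ] np by blast
  obtain r t where rt: "e = mul r A" "f = mul t B" using ef unfolding princ_def by blast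
  have "mul e f = mul (mul r t) (mul A B)" unfolding rt by (metis mul_assoc mul_comm)
  hence efz: "mul e f = zero" using AB mul_zero_r by simp
  have "mul e one \<in> add (mul e e) (mul e f)" using mul_in[OF ef(3)] .
  hence idem: "mul e e = e" using efz add_zero_r mul_one_r by simp
  have "e \<noteq> zero"
  proof
    assume "e = zero"
    hence "f = one" using ef(3) add_zero by simp
    have "J \<subseteq> P1" using dis P1 by blast
    hence "B \<in> P1" unfolding B_def using pw_in[OF prime_hid[OF P1(1)] _ n0] ab(2) by blast
    hence "f \<in> P1" using rt hid_mul[OF prime_hid[OF P1(1)]] by blast
    thus False using \<open>f = one\<close> prime_one[OF P1(1)] by blast
  qed
  moreover have "e \<noteq> one"
  proof
    assume "e = one"
    have "I \<subseteq> P2" using dis P2 by blast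
    hence "A \<in> P2" unfolding A_def using pw_in[OF prime_hid[OF P2(1)] _ n0] ab(1) by blast
    hence "e \<in> P2" using rt hid_mul[OF prime_hid[OF P2(1)]] by blast
    thus False using \<open>e = one\<close> prime_one[OF P2(1)] by blast
  qed
  ultimately show "\<exists>e. mul e e = e \<and> e \<noteq> zero \<and> e \<noteq> one" using idem by blast
next
  assume "\<exists>e. mul e e = e \<and> e \<noteq> zero \<and> e \<noteq> one"
  then obtain e where e: "mul e e = e" "e \<noteq> zero" "e \<noteq> one" by blast
  define J where "J = {z. mul z e \<in> {zero}}"
  have hJ: "hid J" unfolding J_def by (rule hid_colon[OF hid_zs])
  have k1: "\<not> (J \<subseteq> P \<and> e \<in> P)" if P: "prime_hyperideal add mul zero P" for P
  proof
    assume JP: "J \<subseteq> P \<and> e \<in> P"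
    have "mul e ` add one (neg e) = add e (neg e)"
      using distrib[of e one "neg e"] mul_one_r mul_neg e(1) by metis
    hence "zero \<in> mul e ` add one (neg e)" using neg_in by metis
    then obtain f where f: "f \<in> add one (neg e)" "mul e f = zero" by blast
    have "f \<in> J" unfolding J_def using f(2) mul_comm by (metis mem_Collect_eq singletonI)
    have "f \<in> add (neg e) one" using f(1) add_comm by metis
    hence "one \<in> add f (neg (neg e))" using rev by metis
    hence "one \<in> add f e" using neg_neg by metis
    hence "one \<in> P" using prime_add[OF P] JP \<open>f \<in> J\<close> by blast
    thus False using prime_one[OF P] by blast
  qed
  have k2: "J \<subseteq> P" if P: "prime_hyperideal add mul zero P" "e \<notin> P" for P
  proof
    fix x assume "x \<in> J"
    hence "mul x e = zero" unfolding J_def by simp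
    hence "mul x e \<in> P" using hid_zero[OF prime_hid[OF P(1)]] by simp
    thus "x \<in> P" using prime_mul[OF P(1)] P(2) by blast
  qed
  have k3: "princ e \<subseteq> P \<longleftrightarrow> e \<in> P" if P: "prime_hyperideal add mul zero P" for P
    using x_princ hid_mul[OF prime_hid[OF P]] unfolding princ_def by blast
  define E1 where "E1 = hSpec add mul zero - hV add mul zero J"
  define E2 where "E2 = hSpec add mul zero - hV add mul zero (princ e)"
  have o1: "openin (zariski add mul zero) E1" unfolding open_zar E1_def using hJ by blast
  have o2: "openin (zariski add mul zero) E2" unfolding open_zar E2_def using hid_princ by blast
  have c: "topspace (zariski add mul zero) \<subseteq> E1 \<union> E2"
  proof
    fix P assume "P \<in> topspace (zariski add mul zero)"
    hence P: "prime_hyperideal add mul zero P" "P \<in> hSpec add mul zero" using top_zar mem_Spec by auto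
    have "\<not> (J \<subseteq> P \<and> princ e \<subseteq> P)" using k1[OF P(1)] k3[OF P(1)] by blast
    thus "P \<in> E1 \<union> E2" unfolding E1_def E2_def using P mem_V[of P J] mem_V[of P "princ e"] by blast
  qed
  have d: "E1 \<inter> E2 = {}"
  proof (rule ccontr)
    assume "E1 \<inter> E2 \<noteq> {}"
    then obtain P where "P \<in> E1" "P \<in> E2" by blast
    hence P: "prime_hyperideal add mul zero P" "\<not> J \<subseteq> P" "\<not> princ e \<subseteq> P"
      unfolding E1_def E2_def using mem_Spec[of P] mem_V[of P J] mem_V[of P "princ e"] by blast+
    thus False using k2 k3 by blast
  qed
  have ne1: "E1 \<noteq> {}"
  proof -
    have "princ e \<inter> {one} = {}"
    proof (rule ccontr)
      assume "princ e \<inter> {one} \<noteq> {}"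
      then obtain r where r: "mul r e = one" unfolding princ_def by blast
      have "e = mul (mul r e) e" using r mul_one by simp
      also have "\<dots> = mul r e" using e(1) mul_assoc by simp
      finally show False using r e(3) by simp
    qed
    then obtain P where P: "prime_hyperideal add mul zero P" "princ e \<subseteq> P"
      using exists_prime[OF hid_princ, of "{one}" e] mul_one by auto
    have "e \<in> P" using P x_princ by blast
    hence "\<not> J \<subseteq> P" using k1[OF P(1)] by blast
    hence "P \<in> E1" unfolding E1_def using P(1) mem_Spec[of P] mem_V[of P J] by blast
    thus ?thesis by blast
  qed
  have ne2: "E2 \<noteq> {}"
  proof -
    have "J \<inter> {one} = {}" unfolding J_def using mul_one e(2) by auto
    then obtain P where P: "prime_hyperideal add mul zero P" "J \<subseteq> P"
      using exists_prime[OF hJ, of "{one}"] mul_one by auto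
    have "e \<notin> P" using k1[OF P(1)] P(2) by blast
    hence "\<not> princ e \<subseteq> P" using x_princ by blast
    hence "P \<in> E2" unfolding E2_def using P(1) mem_Spec[of P] mem_V[of P "princ e"] by blast
    thus ?thesis by blast
  qed
  show "\<not> connected_space (zariski add mul zero)"
    unfolding connected_space_def using o1 o2 c d ne1 ne2 by blast
qed

end

theorem proposition3p22:
  fixes add :: "'a \<Rightarrow> 'a \<Rightarrow> 'a set" and mul :: "'a \<Rightarrow> 'a \<Rightarrow> 'a"
    and zero one :: 'a
  assumes "hyperring add mul zero one"
  shows "\<not> connected_space (zariski add mul zero) \<longleftrightarrow>
           (\<exists>e. mul e e = e \<and> e \<noteq> zero \<and> e \<noteq> one)"
  using hr.main[OF hr.intro[OF assms]] .

end
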